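(* For every integer $n\geq -1$, the polynomial $e_1^{n}\,\tilde e_1^{\,n-1}\in\mathbb{Z}\langle X\rangle$ is a polynomial with Jordan property.
   Context: Rings are associative with $1$; homomorphisms preserve $1$. A Jordan homomorphism $\alpha:R\to R'$ is a map with $(a+b)^\alpha=a^\alpha+b^\alpha$, $1^\alpha=1'$, $(aba)^\alpha=a^\alpha b^\alpha a^\alpha$ for all $a,b\in R$. Let $\mathbb{Z}\langle X\rangle$ be the free $\mathbb{Z}$-algebra on non-commuting indeterminates $x_1,x_2,\ldots$. For a finite or infinite sequence $T=(t_1,t_2,\ldots)$ in a ring $R$, $f(T)$ denotes the image of $f\in\mathbb{Z}\langle X\rangle$ under the homomorphism $x_i\mapsto t_i$ (finite sequences are padded with zeros, i.e. $x_i\mapsto 0$ for $i$ beyond the length). A polynomial $f\in\mathbb{Z}\langle X\rangle$ has the Jordan property if $f(T)^\alpha=f(T^\alpha)$ for every Jordan homomorphism $\alpha:R\to R'$ between arbitrary rings and every finite or infinite sequence $T$ in $R$, where $T^\alpha=(t_1^\alpha,t_2^\alpha,\ldots)$. Define $e^{(-2)}:=-1$, $e^{(-1)}:=0$, $e^{(0)}:=1$, $e^{(n)}:=e^{(n-1)}x_n-e^{(n-2)}$ for $n\geq1$. Put $e_1^{m}:=e^{(m)}$ for $m\geq -2$, and $\tilde e_1^{\,m}:=e^{(m)}(x_m,x_{m-1},\ldots,x_1)$ (the polynomial obtained from $e^{(m)}$ by substituting $x_i\mapsto x_{m+1-i}$ for $i\leq m$) for $m\geq 1$, $\tilde e_1^{\,m}:=e^{(m)}$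 for $-2\leq m\leq 0$. *)

theory Defs
  imports Main
begin

text \<open>Elements of the free Z-algebra Z<X> on x_1, x_2, ... are represented by
  (non-unique) ring expressions; every element of Z<X> is the value of such an
  expression and evaluation at a sequence is the induced ring homomorphism.
  Variable x_i is Var i (i >= 1); a sequence T = (t_1, t_2, ...) is a function
  T :: nat => 'a with T i = t_i (T 0 is never used). Finite sequences are the
  special case of sequences that are eventually zero.\<close>

datatype ncpoly = Var nat | Const int | Add ncpoly ncpoly | Mul ncpoly ncpoly | Neg ncpoly

fun eval :: "(nat \<Rightarrow> 'a::ring_1) \<Rightarrow> ncpoly \<Rightarrow> 'a" where
  "eval T (Var i) = T i"
| "eval T (Const c) = of_int c"
| "eval T (Add p q) = eval T p + eval T q"
| "eval T (Mul p q) = eval T p * eval T q"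
| "eval T (Neg p) = - eval T p"

fun rename :: "(nat \<Rightarrow> nat) \<Rightarrow> ncpoly \<Rightarrow> ncpoly" where
  "rename \<sigma> (Var i) = Var (\<sigma> i)"
| "rename \<sigma> (Const c) = Const c"
| "rename \<sigma> (Add p q) = Add (rename \<sigma> p) (rename \<sigma> q)"
| "rename \<sigma> (Mul p q) = Mul (rename \<sigma> p) (rename \<sigma> q)"
| "rename \<sigma> (Neg p) = Neg (rename \<sigma> p)"

definition Sub :: "ncpoly \<Rightarrow> ncpoly \<Rightarrow> ncpoly" where
  "Sub p q = Add p (Neg q)"

definition jordan_hom :: "('a::ring_1 \<Rightarrow> 'b::ring_1) \<Rightarrow> bool" where
  "jordan_hom \<alpha> \<longleftrightarrow> (\<forall>a b. \<alpha> (a + b) = \<alpha> a + \<alpha> b) \<and> \<alpha> 1 = 1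
     \<and> (\<forall>a b. \<alpha> (a * b * a) = \<alpha> a * \<alpha> b * \<alpha> a)"

text \<open>e^(n) for n >= 0: e^(0) = 1, e^(1) = e^(0) x_1 - e^(-1) = 1*x_1 - 0,
  e^(n+2) = e^(n+1) x_(n+2) - e^(n).\<close>
fun enat :: "nat \<Rightarrow> ncpoly" where
  "enat 0 = Const 1"
| "enat (Suc 0) = Sub (Mul (Const 1) (Var 1)) (Const 0)"
| "enat (Suc (Suc n)) = Sub (Mul (enat (Suc n)) (Var (Suc (Suc n)))) (enat n)"

text \<open>e^(m) for integer m >= -2 (value at m < -2 is irrelevant).\<close>
definition e :: "int \<Rightarrow> ncpoly" where
  "e m = (if m = -2 then Const (-1) else if m = -1 then Const 0 else enat (nat m))"

definition e1 :: "int \<Rightarrow> ncpoly" where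
  "e1 m = e m"

definition e1_tilde :: "int \<Rightarrow> ncpoly" where
  "e1_tilde m = (if m \<ge> 1
      then rename (\<lambda>i. if 1 \<le> i \<and> int i \<le> m then nat (m + 1 - int i) else i) (e m)
      else e m)"

end

theory Submission
  imports Defs
begin

fun E :: "(nat \<Rightarrow> 'a::ring_1) \<Rightarrow> nat \<Rightarrow> 'a" where
  "E S 0 = 1"
| "E S (Suc 0) = S 1"
| "E S (Suc (Suc n)) = E S (Suc n) * S (Suc (Suc n)) - E S n"

fun Er :: "(nat \<Rightarrow> 'a::ring_1) \<Rightarrow> nat \<Rightarrow> 'a" where
  "Er S 0 = 1"
| "Er S (Suc 0) = S 1"
| "Er S (Suc (Suc n)) = S (Suc (Suc n)) * Er S (Suc n) - Er S n"

lemma eval_enat: "eval S (enat k) = E S k"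
  by (induction k rule: enat.induct) (simp_all add: Sub_def)

lemma eval_rename: "eval T (rename \<sigma> p) = eval (T \<circ> \<sigma>) p"
  by (induction p) auto

lemma E_left:
  "E S (Suc (Suc k)) = S 1 * E (\<lambda>i. S (Suc i)) (Suc k) - E (\<lambda>i. S (Suc (Suc i))) k
   \<and> E S (Suc (Suc (Suc k))) = S 1 * E (\<lambda>i. S (Suc i)) (Suc (Suc k)) - E (\<lambda>i. S (Suc (Suc i))) (Suc k)"
proof (induction k)
  case 0
  then show ?case by (simp add: algebra_simps numeral_2_eq_2 numeral_3_eq_3)
next
  case (Suc k)
  then obtain h1 h2 where
    h1: "E S (Suc (Suc k)) = S 1 * E (\<lambda>i. S (Suc i)) (Suc k) - E (\<lambda>i. S (Suc (Suc i))) k" and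
    h2: "E S (Suc (Suc (Suc k))) = S 1 * E (\<lambda>i. S (Suc i)) (Suc (Suc k)) - E (\<lambda>i. S (Suc (Suc i))) (Suc k)"
    by blast
  have "E S (Suc (Suc (Suc (Suc k)))) = E S (Suc (Suc (Suc k))) * S (Suc (Suc (Suc (Suc k)))) - E S (Suc (Suc k))"
    by simp
  also have "\<dots> = S 1 * E (\<lambda>i. S (Suc i)) (Suc (Suc (Suc k))) - E (\<lambda>i. S (Suc (Suc i))) (Suc (Suc k))"
    unfolding h1 h2 by (simp add: algebra_simps)
  finally show ?case using h2 by simp
qed

lemma E_rev:
  "(\<And>i. 1 \<le> i \<Longrightarrow> i \<le> m \<Longrightarrow> S' i = S (m + 1 - i)) \<Longrightarrow> E S' m = Er S m"
proof (induction S m arbitrary: S' rule: Er.induct)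
  case (1 S)
  then show ?case by simp
next
  case (2 S)
  then show ?case by simp
next
  case (3 S n)
  have a: "E (\<lambda>i. S' (Suc i)) (Suc n) = Er S (Suc n)"
    using 3 by (intro "3.IH"(1)) auto
  have b: "E (\<lambda>i. S' (Suc (Suc i))) n = Er S n"
    using 3 by (intro "3.IH"(2)) auto
  have c: "S' 1 = S (Suc (Suc n))" using 3 by auto
  show ?case using E_left[of S' n] a b c by simp
qed

lemma eval_e1_tilde:
  assumes "m \<ge> 0"
  shows "eval T (e1_tilde m) = Er T (nat m)"
proof (cases "m \<ge> 1")
  case True
  let ?\<sigma> = "(\<lambda>i. if 1 \<le> i \<and> int i \<le> m then nat (m + 1 - int i) else i)"
  have "eval T (e1_tilde m) = eval (T \<circ> ?\<sigma>) (enat (nat m))"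
    using True by (simp add: e1_tilde_def e_def eval_rename)
  also have "\<dots> = Er T (nat m)"
    unfolding eval_enat
  proof (rule E_rev)
    fix i assume "1 \<le> i" "i \<le> nat m"
    moreover have "nat (m + 1 - int i) = nat m + 1 - i" using \<open>i \<le> nat m\<close> True by linarith
    ultimately show "(T \<circ> ?\<sigma>) i = T (nat m + 1 - i)" by auto
  qed
  finally show ?thesis .
next
  case False
  then have "m = 0" using assms by auto
  then show ?thesis by (simp add: e1_tilde_def e_def)
qed

definition W :: "(nat \<Rightarrow> 'a::ring_1) \<Rightarrow> nat \<Rightarrow> 'a \<Rightarrow> 'a" where
  "W T n y = E T n * y * Er T n"

definition V :: "(nat \<Rightarrow> 'a::ring_1) \<Rightarrow> nat \<Rightarrow> 'a \<Rightarrow> 'a \<Rightarrow> 'a" where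
  "V T n u v = E T (Suc n) * u * v * Er T n + E T n * v * u * Er T (Suc n)"

lemma W0: "W T 0 y = y" by (simp add: W_def)
lemma W1: "W T (Suc 0) y = T 1 * y * T 1" by (simp add: W_def)
lemma W2: "W T (Suc (Suc n)) y = W T (Suc n) (T (Suc (Suc n)) * y * T (Suc (Suc n))) + W T n y
   - V T n (T (Suc (Suc n))) y"
  by (simp add: W_def V_def algebra_simps)
lemma V0: "V T 0 u v = T 1 * u * v + v * u * T 1" by (simp add: V_def)
lemma V1: "V T (Suc n) u v = W T (Suc n) (T (Suc (Suc n)) * u * v + v * u * T (Suc (Suc n))) - V T n v u"
  by (simp add: W_def V_def algebra_simps)

locale jh =
  fixes \<alpha> :: "'a::ring_1 \<Rightarrow> 'b::ring_1"
  assumes jh: "jordan_hom \<alpha>"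
begin

lemma add: "\<alpha> (a + b) = \<alpha> a + \<alpha> b" using jh by (simp add: jordan_hom_def)
lemma one: "\<alpha> 1 = 1" using jh by (simp add: jordan_hom_def)
lemma U: "\<alpha> (a * b * a) = \<alpha> a * \<alpha> b * \<alpha> a" using jh by (simp add: jordan_hom_def)
lemma zero: "\<alpha> 0 = 0" using add[of 0 0] by simp
lemma neg: "\<alpha> (- a) = - \<alpha> a"
  using minus_unique[of "\<alpha> a" "\<alpha> (-a)"] add[of a "-a"] zero by simp
lemma diff: "\<alpha> (a - b) = \<alpha> a - \<alpha> b"
  using add[of a "-b"] neg[of b] by simp
lemma triple: "\<alpha> (a * b * c + c * b * a) = \<alpha> a * \<alpha> b * \<alpha> c + \<alpha> c * \<alpha> b * \<alpha> a"
proof -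
  have e: "(a + c) * b * (a + c) = a * b * a + c * b * c + (a * b * c + c * b * a)"
    by (simp add: algebra_simps)
  have "\<alpha> ((a + c) * b * (a + c)) = (\<alpha> a + \<alpha> c) * \<alpha> b * (\<alpha> a + \<alpha> c)"
    using U[of "a+c" b] add by simp
  moreover have "(\<alpha> a + \<alpha> c) * \<alpha> b * (\<alpha> a + \<alpha> c) = \<alpha> a * \<alpha> b * \<alpha> a + \<alpha> c * \<alpha> b * \<alpha> c
     + (\<alpha> a * \<alpha> b * \<alpha> c + \<alpha> c * \<alpha> b * \<alpha> a)"
    by (simp add: algebra_simps)
  ultimately show ?thesis unfolding e add U by simp
qed

lemma WV: "(\<forall>y. \<alpha> (W T n y) = W (\<alpha> \<circ> T) n (\<alpha> y)) \<and> (\<forall>u v. \<alpha> (V T n u v) = V (\<alpha> \<circ> T) n (\<alpha> u) (\<alpha> v))"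
proof (induction n rule: less_induct)
  case (less n)
  have Wn: "\<alpha> (W T n y) = W (\<alpha> \<circ> T) n (\<alpha> y)" for y
  proof (cases n)
    case 0 then show ?thesis by (simp add: W0)
  next
    case (Suc k)
    show ?thesis
    proof (cases k)
      case 0 then show ?thesis using Suc by (simp add: W1 U)
    next
      case (Suc j)
      then show ?thesis using \<open>n = Suc k\<close> less[of k] less[of j]
        by (simp add: W2 diff add U comp_def)
    qed
  qed
  moreover have "\<alpha> (V T n u v) = V (\<alpha> \<circ> T) n (\<alpha> u) (\<alpha> v)" for u v
  proof (cases n)
    case 0 then show ?thesis by (simp add: V0 triple)
  next
    case (Suc k)
    then show ?thesis using Wn less[of k] by (simp add: V1 diff triple comp_def)
  qed
  ultimately show ?case by blast
qed

lemma PQ: "\<alpha> (E T (Suc n) * Er T n) = E (\<alpha> \<circ> T) (Suc n) * Er (\<alpha> \<circ> T) n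
  \<and> \<alpha> (E T n * Er T (Suc n)) = E (\<alpha> \<circ> T) n * Er (\<alpha> \<circ> T) (Suc n)"
proof (induction n)
  case 0
  then show ?case by simp
next
  case (Suc n)
  have p: "E S (Suc (Suc n)) * Er S (Suc n) = W S (Suc n) (S (Suc (Suc n))) - E S n * Er S (Suc n)"
    for S :: "nat \<Rightarrow> 'c::ring_1"
    by (simp add: W_def algebra_simps)
  have q: "E S (Suc n) * Er S (Suc (Suc n)) = W S (Suc n) (S (Suc (Suc n))) - E S (Suc n) * Er S n"
    for S :: "nat \<Rightarrow> 'c::ring_1"
    by (simp add: W_def algebra_simps)
  show ?case unfolding p q diff using Suc WV by (simp add: comp_def)
qed

end

theorem proposition3p3:
  fixes \<alpha> :: "'a::ring_1 \<Rightarrow> 'b::ring_1" and n :: int and T :: "nat \<Rightarrow> 'a"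
  assumes "n \<ge> -1" and "jordan_hom \<alpha>"
  shows "\<alpha> (eval T (Mul (e1 n) (e1_tilde (n - 1)))) = eval (\<alpha> \<circ> T) (Mul (e1 n) (e1_tilde (n - 1)))"
proof -
  interpret jh \<alpha> using assms(2) by unfold_locales
  consider "n = -1" | "n = 0" | "n \<ge> 1" using assms(1) by linarith
  then show ?thesis
  proof cases
    case 1 then show ?thesis by (simp add: e1_def e_def zero)
  next
    case 2 then show ?thesis by (simp add: e1_def e1_tilde_def e_def zero)
  next
    case 3
    then obtain k where k: "nat n = Suc k" "nat (n - 1) = k" by (intro that[of "nat (n - 1)"]) auto
    have ev: "eval S (Mul (e1 n) (e1_tilde (n - 1))) = E S (Suc k) * Er S k" for S :: "nat \<Rightarrow> 'c::ring_1"
      using 3 k by (simp add: e1_def e_def eval_enat eval_e1_tilde)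
    show ?thesis unfolding ev using PQ by blast
  qed
qed

end
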